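(* For every integer $t$, \begin{align*} \sum_{n=1}^\infty\binom{2n}{n}\frac{O_nL_{n+t}}{12^n}&=\frac{\sqrt{15}\sqrt{\alpha+2}}{10}\left((\alpha^t+\beta^{t+1})\ln\alpha-(\alpha^t-\beta^{t+1})\ln\Bigl(\frac{\sqrt5}{3}\Bigr)\right),\\ \sum_{n=1}^\infty\binom{2n}{n}\frac{O_nF_{n+t}}{12^n}&=\frac{\sqrt3\sqrt{\alpha+2}}{10}\left((\alpha^t-\beta^{t+1})\ln\alpha-(\alpha^t+\beta^{t+1})\ln\Bigl(\frac{\sqrt5}{3}\Bigr)\right), \end{align*} and, for every gibonacci sequence $G_j=G_j(a,b)$, \begin{align*} \sum_{n=1}^\infty\binom{2n}{n}\frac{O_nG_{n+t}}{12^n}&=\frac{\sqrt3\sqrt{\alpha+2}}{10}\Bigl(\bigl(a(\alpha^{t-1}-\beta^t)+b(\alpha^t-\beta^{t+1})\bigr)\ln\alpha\\ &\qquad-\bigl(a(\alpha^{t-1}+\beta^t)+b(\alpha^t+\beta^{t+1})\bigr)\ln\Bigl(\frac{\sqrt5}{3}\Bigr)\Bigr). \end{align*}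
   Context: $O_n=\sum_{j=1}^n\frac1{2j-1}$. $F_n$ and $L_n$ are the Fibonacci and Lucas numbers ($F_0=0,F_1=1$, $L_0=2,L_1=1$, $u_n=u_{n-1}+u_{n-2}$), extended to all integers by the recurrence. $\alpha=(1+\sqrt5)/2$, $\beta=-1/\alpha$. For numbers $a,b$ not both zero, the gibonacci sequence $G_j=G_j(a,b)$ is defined by $G_0=a$, $G_1=b$, $G_j=G_{j-1}+G_{j-2}$, extended to negative indices by $G_{-j}=G_{-(j-2)}-G_{-(j-1)}$; equivalently $G_j=\frac{(b-a\beta)\alpha^j+(a\alpha-b)\beta^j}{\alpha-\beta}$. *)

theory Defs
  imports Complex_Main
begin

definition phi :: real where "phi = (1 + sqrt 5) / 2"
definition psi :: real where "psi = - 1 / phi"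

definition Odd_harm :: "nat \<Rightarrow> real" where
  "Odd_harm n = (\<Sum>j=1..n. 1 / (2 * real j - 1))"

fun gib_nat :: "real \<Rightarrow> real \<Rightarrow> nat \<Rightarrow> real" where
  "gib_nat a b 0 = a"
| "gib_nat a b (Suc 0) = b"
| "gib_nat a b (Suc (Suc n)) = gib_nat a b n + gib_nat a b (Suc n)"

text \<open>gib_neg a b j = G_{-j}(a,b), via G_{-j} = G_{-(j-2)} - G_{-(j-1)}\<close>
fun gib_neg :: "real \<Rightarrow> real \<Rightarrow> nat \<Rightarrow> real" where
  "gib_neg a b 0 = a"
| "gib_neg a b (Suc 0) = b - a"
| "gib_neg a b (Suc (Suc n)) = gib_neg a b n - gib_neg a b (Suc n)"

definition gib :: "real \<Rightarrow> real \<Rightarrow> int \<Rightarrow> real" where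
  "gib a b j = (if 0 \<le> j then gib_nat a b (nat j) else gib_neg a b (nat (- j)))"

definition fibz :: "int \<Rightarrow> real" where "fibz = gib 0 1"
definition lucz :: "int \<Rightarrow> real" where "lucz = gib 2 1"

end

theory Submission
  imports Defs "HOL-Computational_Algebra.Formal_Power_Series" "HOL-Analysis.Analysis"
begin


unbundle fps_syntax

definition cb :: "nat \<Rightarrow> real" where "cb n = real ((2*n) choose n)"
definition lg :: "nat \<Rightarrow> real" where "lg n = 4^n / real n"

lemma cb_rec_nat: "Suc n * ((2 * Suc n) choose Suc n) = (4*n+2) * ((2*n) choose n)"
proof -
  have 1: "Suc n * (Suc (Suc (2*n)) choose Suc n) = Suc (Suc (2*n)) * (Suc (2*n) choose n)"
    by (rule Suc_times_binomial)
  have 2: "Suc n * (Suc (2*n) choose Suc n) = Suc (2*n) * ((2*n) choose n)"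
    by (rule Suc_times_binomial)
  have 3: "(Suc (2*n) choose Suc n) = (Suc (2*n) choose n)"
    using binomial_symmetric[of n "Suc (2*n)"] by simp
  have e: "2 * Suc n = Suc (Suc (2*n))" by simp
  have "Suc n * (Suc n * ((2 * Suc n) choose Suc n)) = Suc n * (Suc (Suc (2*n)) * (Suc (2*n) choose n))"
    by (simp only: e 1)
  also have "\<dots> = Suc (Suc (2*n)) * (Suc n * (Suc (2*n) choose n))" by (simp only: ac_simps)
  also have "\<dots> = Suc (Suc (2*n)) * (Suc (2*n) * ((2*n) choose n))" by (simp only: 2 3[symmetric])
  also have "\<dots> = Suc n * ((4*n+2) * ((2*n) choose n))" by (simp add: algebra_simps)
  finally show ?thesis by (metis Suc_neq_Zero mult_left_cancel)
qed

lemma cb_rec: "real (Suc n) * cb (Suc n) = (4*n+2) * cb n"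
proof -
  have "real (Suc n * ((2 * Suc n) choose Suc n)) = real ((4*n+2) * ((2*n) choose n))"
    by (simp only: cb_rec_nat)
  then show ?thesis unfolding cb_def by (simp only: of_nat_mult of_nat_add of_nat_numeral)
qed

lemma Odd_harm_Suc: "Odd_harm (Suc n) = Odd_harm n + 1 / (2 * real n + 1)"
  unfolding Odd_harm_def by simp

lemma E_nth: "((1 - fps_const (4::real) * fps_X) * G) $ n = G $ n - (if n = 0 then 0 else 4 * G $ (n - 1))"
  by (simp add: algebra_simps)

lemma Ecb: "(1 - fps_const (4::real) * fps_X) * fps_deriv (Abs_fps cb) = fps_const 2 * Abs_fps cb"
proof (rule fps_ext)
  fix n
  show "((1 - fps_const (4::real) * fps_X) * fps_deriv (Abs_fps cb)) $ n = (fps_const 2 * Abs_fps cb) $ n"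
  proof (cases n)
    case 0 then show ?thesis using cb_rec[of 0] by (simp add: E_nth cb_def numeral_2_eq_2)
  next
    case (Suc m)
    have "real (Suc (Suc m)) * cb (Suc (Suc m)) = (4 * real (Suc m) + 2) * cb (Suc m)" by (rule cb_rec)
    then show ?thesis using Suc by (simp only: E_nth) (simp add: algebra_simps numeral_2_eq_2)
  qed
qed

lemma Elg: "(1 - fps_const (4::real) * fps_X) * fps_deriv (Abs_fps lg) = fps_const 4"
proof (rule fps_ext)
  fix n
  show "((1 - fps_const (4::real) * fps_X) * fps_deriv (Abs_fps lg)) $ n = fps_const 4 $ n"
    by (simp only: E_nth) (cases n, auto simp: lg_def)
qed

definition Ahar :: "nat \<Rightarrow> real" where "Ahar n = 2 * cb n * Odd_harm n"

lemma Arec: "real (Suc k) * Ahar (Suc k) = (4 * real k + 2) * Ahar k + 4 * cb k"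
proof -
  have "real (Suc k) * Ahar (Suc k) = 2 * (real (Suc k) * cb (Suc k)) * Odd_harm (Suc k)"
    unfolding Ahar_def by simp
  also have "\<dots> = 2 * ((4 * real k + 2) * cb k) * (Odd_harm k + 1 / (2 * real k + 1))"
    by (simp only: cb_rec Odd_harm_Suc)
  also have "\<dots> = (4 * real k + 2) * Ahar k + 4 * cb k"
    unfolding Ahar_def by (simp add: field_simps)
  finally show ?thesis .
qed

lemma EA: "(1 - fps_const (4::real) * fps_X) * fps_deriv (Abs_fps Ahar) = fps_const 2 * Abs_fps Ahar + fps_const 4 * Abs_fps cb"
proof (rule fps_ext)
  fix n
  show "((1 - fps_const (4::real) * fps_X) * fps_deriv (Abs_fps Ahar)) $ n = (fps_const 2 * Abs_fps Ahar + fps_const 4 * Abs_fps cb) $ n"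
  proof (cases n)
    case 0 then show ?thesis by (simp add: E_nth Ahar_def cb_def Odd_harm_def)
  next
    case (Suc m)
    have "real (Suc (Suc m)) * Ahar (Suc (Suc m)) = (4 * real (Suc m) + 2) * Ahar (Suc m) + 4 * cb (Suc m)" by (rule Arec)
    then show ?thesis using Suc by (simp only: E_nth) (simp add: algebra_simps)
  qed
qed

lemma EP: "(1 - fps_const (4::real) * fps_X) * fps_deriv (Abs_fps cb * Abs_fps lg) = fps_const 2 * (Abs_fps cb * Abs_fps lg) + fps_const 4 * Abs_fps cb"
proof -
  have "(1 - fps_const (4::real) * fps_X) * fps_deriv (Abs_fps cb * Abs_fps lg) =
    ((1 - fps_const (4::real) * fps_X) * fps_deriv (Abs_fps cb)) * Abs_fps lg + Abs_fps cb * ((1 - fps_const (4::real) * fps_X) * fps_deriv (Abs_fps lg))"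
    by (simp add: algebra_simps)
  also have "\<dots> = fps_const 2 * (Abs_fps cb * Abs_fps lg) + fps_const 4 * Abs_fps cb"
    by (simp only: Ecb Elg) (simp add: algebra_simps)
  finally show ?thesis .
qed

lemma conv_eq: "(Abs_fps cb * Abs_fps lg) $ n = Ahar n"
proof -
  define D where "D = Abs_fps cb * Abs_fps lg - Abs_fps Ahar"
  have ED: "(1 - fps_const (4::real) * fps_X) * fps_deriv D = fps_const 2 * D"
    unfolding D_def fps_deriv_sub right_diff_distrib EP EA by (simp add: algebra_simps)
  have "D $ n = 0"
  proof (induction n)
    case 0 then show ?case by (simp add: D_def Ahar_def Odd_harm_def lg_def)
  next
    case (Suc n)
    have "((1 - fps_const (4::real) * fps_X) * fps_deriv D) $ n = (fps_const 2 * D) $ n"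
      by (simp only: ED)
    then have "real (n+1) * D $ (n+1) = 0" using Suc.IH
      by (simp only: E_nth) (cases n, simp_all)
    then show ?case by simp
  qed
  then show ?thesis unfolding D_def by simp
qed


lemma gchoose_cb: "((-1/2::real) gchoose n) * (-4)^n = cb n"
proof (induction n)
  case 0 then show ?case by (simp add: cb_def)
next
  case (Suc k)
  have "real (Suc k) * ((-1/2::real) gchoose Suc k) = ((-1/2) - real k) * ((-1/2) gchoose k)"
    using gbinomial_absorption[of k "-1/2::real"] gbinomial_absorb_comp[of "-1/2::real" k] by simp
  then have h: "real (Suc k) * ((-1/2::real) gchoose Suc k) = ((-1/2) - real k) * ((-1/2) gchoose k)" .
  have "real (Suc k) * (((-1/2::real) gchoose Suc k) * (-4)^Suc k) = (real (Suc k) * ((-1/2::real) gchoose Suc k)) * (-4) * (-4)^k"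
    by (simp only: power_Suc ac_simps)
  also have "\<dots> = ((-1/2) - real k) * ((-1/2) gchoose k) * (-4) * (-4)^k" by (simp only: h)
  also have "\<dots> = (4 * real k + 2) * (((-1/2) gchoose k) * (-4)^k)"
    by (simp add: algebra_simps)
  also have "\<dots> = real (Suc k) * cb (Suc k)" using Suc.IH cb_rec[of k] by simp
  finally show ?case by (metis mult_left_cancel of_nat_eq_0_iff nat.distinct(1))
qed

lemma cb_series: assumes "\<bar>x\<bar> < 1/4" shows "(\<lambda>n. cb n * x^n) sums ((1 - 4*x) powr (-1/2))"
proof -
  have "\<bar>-4*x\<bar> < 1" using assms by simp
  from gen_binomial_real[OF this, of "-1/2"]
  have "(\<lambda>n. ((-1/2) gchoose n) * (-4*x)^n) sums (1 + -4*x) powr (-1/2)" .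
  moreover have "((-1/2) gchoose n) * (-4*x)^n = cb n * x^n" for n
  proof -
    have "((-1/2) gchoose n) * (-4*x)^n = (((-1/2) gchoose n) * (-4)^n) * x^n"
      by (simp only: power_mult_distrib mult.assoc)
    also have "\<dots> = cb n * x^n" by (simp only: gchoose_cb)
    finally show ?thesis .
  qed
  ultimately show ?thesis by simp
qed

lemma lg_series: assumes "\<bar>x\<bar> < 1/4" shows "(\<lambda>n. lg n * x^n) sums (- ln (1 - 4*x))"
proof -
  have "\<bar>-4*x\<bar> < 1" using assms by simp
  from sums_minus[OF ln_series'[OF this]]
  have "(\<lambda>n. - (- ((- (-4*x))^n) / real n)) sums (- ln (1 + -4*x))" .
  moreover have "- (- ((- (-4*x))^n) / real n) = lg n * x^n" for n
    by (simp add: lg_def power_mult_distrib)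
  ultimately show ?thesis by simp
qed

lemma cb_nonneg: "cb n \<ge> 0" by (simp add: cb_def)
lemma lg_nonneg: "lg n \<ge> 0" by (simp add: lg_def)

lemma Ahar_series: assumes "\<bar>x\<bar> < 1/4"
  shows "(\<lambda>n. Ahar n * x^n) sums ((1 - 4*x) powr (-1/2) * (- ln (1 - 4*x)))"
proof -
  have ax: "\<bar>\<bar>x\<bar>\<bar> < 1/4" using assms by simp
  have s1: "summable (\<lambda>n. norm (cb n * x^n))"
    using sums_summable[OF cb_series[OF ax]] by (simp add: abs_mult power_abs cb_nonneg)
  have s2: "summable (\<lambda>n. norm (lg n * x^n))"
    using sums_summable[OF lg_series[OF ax]] by (simp add: abs_mult power_abs lg_nonneg)
  from Cauchy_product_sums[OF s1 s2]
  have "(\<lambda>k. \<Sum>i\<le>k. cb i * x^i * (lg (k - i) * x^(k - i))) sums ((\<Sum>k. cb k * x^k) * (\<Sum>k. lg k * x^k))" .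
  moreover have "(\<Sum>i\<le>k. cb i * x^i * (lg (k - i) * x^(k - i))) = Ahar k * x^k" for k
  proof -
    have "(\<Sum>i\<le>k. cb i * x^i * (lg (k - i) * x^(k - i))) = (\<Sum>i\<le>k. cb i * lg (k - i)) * x^k"
      unfolding sum_distrib_right
      by (rule sum.cong) (auto simp: power_add[symmetric] algebra_simps)
    also have "(\<Sum>i\<le>k. cb i * lg (k - i)) = Ahar k"
      using conv_eq[of k] by (simp add: fps_mult_nth atLeast0AtMost)
    finally show ?thesis .
  qed
  ultimately show ?thesis using sums_unique[OF cb_series[OF assms]] sums_unique[OF lg_series[OF assms]]
    by simp
qed

lemma OH_series: assumes "\<bar>x\<bar> < 1/4"
  shows "(\<lambda>n. real ((2*n) choose n) * Odd_harm n * x^n) sums ((1 - 4*x) powr (-1/2) * (- ln (1 - 4*x)) / 2)"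
proof -
  from sums_divide[OF Ahar_series[OF assms], of 2] show ?thesis
    by (simp add: Ahar_def cb_def mult.assoc)
qed



lemma s5: "sqrt 5 * sqrt 5 = (5::real)" by simp
lemma s5pos: "sqrt 5 > (0::real)" by simp
lemma phi_pos: "phi > 0" unfolding phi_def by (simp add: add_pos_nonneg)
lemma psi_alt: "psi = (1 - sqrt 5) / 2"
proof -
  have "phi * ((1 - sqrt 5)/2) = -1" unfolding phi_def by (simp add: algebra_simps)
  then show ?thesis unfolding psi_def using phi_pos by (simp add: field_simps)
qed
lemma phi_sq: "phi^2 = phi + 1" unfolding phi_def by (simp add: power2_eq_square field_simps)
lemma psi_sq: "psi^2 = psi + 1" unfolding psi_alt by (simp add: power2_eq_square field_simps)
lemma phi_psi: "phi * psi = -1" using phi_pos unfolding psi_def by simp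
lemma phi_minus_psi: "phi - psi = sqrt 5" unfolding psi_alt phi_def by (simp add: field_simps)
lemma phi_plus_psi: "phi + psi = 1" unfolding psi_alt phi_def by (simp add: field_simps)

lemma pow_rec: "(x::real)^2 = x + 1 \<Longrightarrow> x^(Suc (Suc n)) = x^n + x^(Suc n)"
proof -
  assume h: "x^2 = x + 1"
  have "x^(Suc (Suc n)) = x^n * x^2" by (simp add: power2_eq_square)
  also have "\<dots> = x^n + x^(Suc n)" by (simp only: h) (simp add: algebra_simps)
  finally show ?thesis .
qed

lemma binet_nat: "gib_nat a b n = ((b - a*psi)*phi^n + (a*phi - b)*psi^n) / sqrt 5"
proof (induction a b n rule: gib_nat.induct)
  case (1 a b)
  have "(b - a*psi)*phi^0 + (a*phi - b)*psi^0 = a * (phi - psi)" by (simp add: algebra_simps)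
  then show ?case using s5pos by (simp add: phi_minus_psi)
next
  case (2 a b)
  have "(b - a*psi)*phi^Suc 0 + (a*phi - b)*psi^Suc 0 = b * (phi - psi)" by (simp add: algebra_simps)
  then show ?case using s5pos by (simp add: phi_minus_psi)
next
  case (3 a b n)
  show ?case unfolding gib_nat.simps 3 pow_rec[OF phi_sq, of n] pow_rec[OF psi_sq, of n]
    by (simp add: algebra_simps add_divide_distrib[symmetric])
qed

lemma pow_rec': "(x::real)^2 = 1 - x \<Longrightarrow> x^(Suc (Suc n)) = x^n - x^(Suc n)"
proof -
  assume h: "x^2 = 1 - x"
  have "x^(Suc (Suc n)) = x^n * x^2" by (simp add: power2_eq_square)
  also have "\<dots> = x^n - x^(Suc n)" by (simp only: h) (simp add: algebra_simps)
  finally show ?thesis .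
qed

lemma binet_neg: "gib_neg a b n = ((b - a*psi)*(-psi)^n + (a*phi - b)*(-phi)^n) / sqrt 5"
proof (induction a b n rule: gib_neg.induct)
  case (1 a b)
  have "(b - a*psi)*(-psi)^0 + (a*phi - b)*(-phi)^0 = a * (phi - psi)" by (simp add: algebra_simps)
  then show ?case using s5pos by (simp add: phi_minus_psi)
next
  case (2 a b)
  have "(b - a*psi)*(-psi)^Suc 0 + (a*phi - b)*(-phi)^Suc 0 = b * (phi - psi) - a * (phi - psi) * (phi + psi)"
    by (simp add: algebra_simps)
  also have "\<dots> = (b - a) * (phi - psi)" by (simp add: phi_plus_psi algebra_simps)
  finally show ?case using s5pos by (simp add: phi_minus_psi)
next
  case (3 a b n)
  have e1: "(-psi)^2 = 1 - (-psi)" using psi_sq by simp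
  have e2: "(-phi)^2 = 1 - (-phi)" using phi_sq by simp
  show ?case unfolding gib_neg.simps 3 pow_rec'[OF e1, of n] pow_rec'[OF e2, of n]
    by (simp add: algebra_simps diff_divide_distrib[symmetric])
qed

lemma binet: "gib a b j = ((b - a*psi)*phi powi j + (a*phi - b)*psi powi j) / sqrt 5"
proof (cases "0 \<le> j")
  case True
  define m where "m = nat j"
  have m: "j = int m" using True unfolding m_def by simp
  show ?thesis unfolding gib_def m by (simp add: binet_nat)
next
  case False
  define m where "m = nat (-j)"
  have m: "j = - int m" using False unfolding m_def by simp
  have ip: "inverse phi = - psi" unfolding psi_def using phi_pos by (simp add: field_simps)
  have iq: "inverse psi = - phi" unfolding psi_def using phi_pos by (simp add: field_simps)
  have 1: "phi powi j = (-psi)^m" unfolding m power_int_minus power_int_of_nat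
    by (simp only: ip[symmetric] power_inverse)
  have 2: "psi powi j = (-phi)^m" unfolding m power_int_minus power_int_of_nat
    by (simp only: iq[symmetric] power_inverse)
  have "gib a b j = gib_neg a b m" unfolding gib_def using False m_def by simp
  then show ?thesis unfolding 1 2 binet_neg .
qed

definition FF :: "real \<Rightarrow> real" where
  "FF x = (1 - 4*x) powr (-1/2) * (- ln (1 - 4*x)) / 2"

lemma phi_lt3: "phi < 3" unfolding phi_def
  using real_sqrt_less_iff[of 5 25] by simp
lemma psi_bnd: "\<bar>psi\<bar> < 3" unfolding psi_alt using real_sqrt_less_iff[of 5 25] by simp

lemma gib_series_raw:
  "(\<lambda>m. let n = Suc m in real ((2*n) choose n) * Odd_harm n * gib a b (int n + t) / 12 ^ n)
   sums ((b - a*psi) * phi powi t / sqrt 5 * FF (phi/12) + (a*phi - b) * psi powi t / sqrt 5 * FF (psi/12))"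
proof -
  have h1: "\<bar>phi/12\<bar> < 1/4" using phi_lt3 phi_pos by simp
  have h2: "\<bar>psi/12\<bar> < 1/4" using psi_bnd by simp
  define f where "f n = real ((2*n) choose n) * Odd_harm n * gib a b (int n + t) / 12 ^ n" for n :: nat
  have "(\<lambda>n. (b - a*psi) * phi powi t / sqrt 5 * (real ((2*n) choose n) * Odd_harm n * (phi/12)^n)
        + (a*phi - b) * psi powi t / sqrt 5 * (real ((2*n) choose n) * Odd_harm n * (psi/12)^n))
     sums ((b - a*psi) * phi powi t / sqrt 5 * FF (phi/12) + (a*phi - b) * psi powi t / sqrt 5 * FF (psi/12))"
    unfolding FF_def by (intro sums_add sums_mult OH_series h1 h2)
  moreover have "(b - a*psi) * phi powi t / sqrt 5 * (real ((2*n) choose n) * Odd_harm n * (phi/12)^n)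
        + (a*phi - b) * psi powi t / sqrt 5 * (real ((2*n) choose n) * Odd_harm n * (psi/12)^n) = f n" for n
  proof -
    have "phi powi (int n + t) = phi^n * phi powi t" using phi_pos by (simp add: power_int_add)
    moreover have "psi \<noteq> 0" using phi_psi by auto
    then have "psi powi (int n + t) = psi^n * psi powi t" by (simp add: power_int_add)
    ultimately show ?thesis unfolding f_def binet by (simp add: power_divide field_simps)
  qed
  ultimately have "f sums ((b - a*psi) * phi powi t / sqrt 5 * FF (phi/12) + (a*phi - b) * psi powi t / sqrt 5 * FF (psi/12))"
    by simp
  moreover have "f 0 = 0" unfolding f_def Odd_harm_def by simp
  ultimately have "(\<lambda>m. f (Suc m)) sums ((b - a*psi) * phi powi t / sqrt 5 * FF (phi/12) + (a*phi - b) * psi powi t / sqrt 5 * FF (psi/12))"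
    by (simp add: sums_Suc_iff)
  then show ?thesis unfolding f_def Let_def .
qed


lemma phi2: "phi + 2 = sqrt 5 * phi" unfolding phi_def by (simp add: algebra_simps)
lemma K_sq: "(sqrt 3 * sqrt (phi + 2))^2 = 3 * (sqrt 5 * phi)"
  using phi_pos by (simp add: power_mult_distrib phi2)
lemma K_pos: "sqrt 3 * sqrt (phi + 2) > 0" using phi_pos by simp

lemma ln_a: "1 - 4 * (phi/12) = sqrt 5 / (3 * phi)"
proof -
  have "2 * phi - 1 = sqrt 5" unfolding phi_def by (simp add: field_simps)
  then have "3 * phi - phi^2 = sqrt 5" using phi_sq by simp
  then show ?thesis using phi_pos by (simp add: field_simps power2_eq_square)
qed

lemma ln_b: "1 - 4 * (psi/12) = sqrt 5 * phi / 3"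
proof -
  have "3 * phi + 1 = sqrt 5 * phi^2" unfolding phi_def by (simp add: power2_eq_square algebra_simps)
  then show ?thesis unfolding psi_def using phi_pos by (simp add: field_simps power2_eq_square)
qed

lemma FF1: "FF (phi/12) = sqrt 3 * sqrt (phi + 2) / sqrt 5 * (ln phi - ln (sqrt 5 / 3)) / 2"
proof -
  define K where "K = sqrt 3 * sqrt (phi + 2)"
  have Kp: "K > 0" unfolding K_def by (rule K_pos)
  have e: "sqrt 5 / (3 * phi) = (sqrt 5 / K)^2"
    using K_sq phi_pos Kp unfolding K_def[symmetric] by (simp add: power_divide field_simps)
  have sq: "sqrt (sqrt 5 / (3 * phi)) = sqrt 5 / K" unfolding e using Kp by simp
  have pw: "(sqrt 5 / (3 * phi)) powr (-1/2) = K / sqrt 5"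
  proof -
    have "(sqrt 5 / (3 * phi)) powr (-1/2) = inverse ((sqrt 5 / (3 * phi)) powr (1/2))"
      by (simp add: powr_minus[symmetric])
    also have "\<dots> = K / sqrt 5" using phi_pos by (simp add: powr_half_sqrt sq)
    finally show ?thesis .
  qed
  have l: "ln (sqrt 5 / (3 * phi)) = ln (sqrt 5 / 3) - ln phi"
  proof -
    have "sqrt 5 / (3 * phi) = (sqrt 5 / 3) / phi" by simp
    moreover have "ln ((sqrt 5 / 3) / phi) = ln (sqrt 5 / 3) - ln phi"
      by (rule ln_divide_pos) (use phi_pos in auto)
    ultimately show ?thesis by simp
  qed
  show ?thesis unfolding FF_def ln_a pw l K_def by simp
qed

lemma FF2: "FF (psi/12) = sqrt 3 * sqrt (phi + 2) / (sqrt 5 * phi) * (- (ln phi + ln (sqrt 5 / 3))) / 2"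
proof -
  define K where "K = sqrt 3 * sqrt (phi + 2)"
  have Kp: "K > 0" unfolding K_def by (rule K_pos)
  have e: "sqrt 5 * phi / 3 = (sqrt 5 * phi / K)^2"
    using K_sq phi_pos Kp unfolding K_def[symmetric] by (simp add: power_divide power_mult_distrib field_simps power2_eq_square)
  have sq: "sqrt (sqrt 5 * phi / 3) = sqrt 5 * phi / K" unfolding e using Kp phi_pos by simp
  have pw: "(sqrt 5 * phi / 3) powr (-1/2) = K / (sqrt 5 * phi)"
  proof -
    have "(sqrt 5 * phi / 3) powr (-1/2) = inverse ((sqrt 5 * phi / 3) powr (1/2))"
      by (simp add: powr_minus[symmetric])
    also have "\<dots> = K / (sqrt 5 * phi)" using phi_pos by (simp add: powr_half_sqrt sq)
    finally show ?thesis .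
  qed
  have l: "ln (sqrt 5 * phi / 3) = ln (sqrt 5 / 3) + ln phi"
  proof -
    have "sqrt 5 * phi / 3 = (sqrt 5 / 3) * phi" by simp
    moreover have "ln ((sqrt 5 / 3) * phi) = ln (sqrt 5 / 3) + ln phi"
      by (rule ln_mult_pos) (use phi_pos in auto)
    ultimately show ?thesis by simp
  qed
  show ?thesis unfolding FF_def ln_b pw l K_def by (simp add: algebra_simps)
qed


lemma alg:
  fixes p q s K L R P Q a b :: real
  assumes p: "p \<noteq> 0" and ss: "s * s = 5" and pq: "q * p = -1"
  shows "(b - a*q)*P/s*(K/s*(L-R)/2) + (a*p-b)*Q/s*(K/(s*p)*(-(L+R))/2)
       = K/10*((a*(P/p - Q) + b*(P - Q*q))*L - (a*(P/p+Q) + b*(P+Q*q))*R)"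
proof -
  have s0: "s \<noteq> 0" using ss by auto
  have q: "q = -1/p" using pq p by (simp add: field_simps)
  have "(b - a*q)*P/s*(K/s*(L-R)/2) + (a*p-b)*Q/s*(K/(s*p)*(-(L+R))/2)
      = K / (2 * (s * s)) * ((b - a*q)*P*(L-R) - (a*p-b)*Q/p*(L+R))"
    using s0 p by (simp add: field_simps)
  also have "\<dots> = K/10 * ((b - a*q)*P*(L-R) - (a*p-b)*Q/p*(L+R))" by (simp add: ss)
  also have "\<dots> = K/10*((a*(P/p - Q) + b*(P - Q*q))*L - (a*(P/p+Q) + b*(P+Q*q))*R)"
    unfolding q using p by (simp add: field_simps)
  finally show ?thesis .
qed

lemma gib_series:
  "(\<lambda>m. let n = Suc m in real ((2*n) choose n) * Odd_harm n * gib a b (int n + t) / 12 ^ n)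
      sums (sqrt 3 * sqrt (phi + 2) / 10 *
        ((a * (phi powi (t-1) - psi powi t) + b * (phi powi t - psi powi (t+1))) * ln phi
         - (a * (phi powi (t-1) + psi powi t) + b * (phi powi t + psi powi (t+1))) * ln (sqrt 5 / 3)))"
proof -
  have p0: "phi \<noteq> 0" using phi_pos by simp
  have q0: "psi \<noteq> 0" using phi_psi by auto
  have e1: "phi powi (t-1) = phi powi t / phi" using p0 by (simp add: power_int_diff)
  have e2: "psi powi (t+1) = psi powi t * psi" using q0 by (simp add: power_int_add)
  have pq: "psi * phi = -1" using phi_psi by (simp add: mult.commute)
  have v: "(b - a*psi) * phi powi t / sqrt 5 * FF (phi/12) + (a*phi - b) * psi powi t / sqrt 5 * FF (psi/12)
    = sqrt 3 * sqrt (phi + 2) / 10 *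
        ((a * (phi powi (t-1) - psi powi t) + b * (phi powi t - psi powi (t+1))) * ln phi
         - (a * (phi powi (t-1) + psi powi t) + b * (phi powi t + psi powi (t+1))) * ln (sqrt 5 / 3))"
    unfolding FF1 FF2 e1 e2
    using alg[OF p0 s5 pq, of b a "phi powi t" "sqrt 3 * sqrt (phi + 2)" "ln phi" "ln (sqrt 5 / 3)" "psi powi t"]
    by (simp add: mult.assoc)
  show ?thesis using gib_series_raw[of a b t] unfolding v .
qed

lemma psi2: "2 + psi = - (sqrt 5 * psi)" unfolding psi_alt by (simp add: field_simps)

lemma luc_alg:
  fixes p q s K L R P Q :: real
  assumes p: "p \<noteq> 0" and h1: "p + 2 = s * p" and h2: "2 + q = - (s * q)"
  shows "K/10*((2*(P/p - Q) + 1*(P - Q*q))*L - (2*(P/p+Q) + 1*(P+Q*q))*R)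
       = K * s / 10 * ((P + Q * q) * L - (P - Q * q) * R)"
proof -
  have c1: "2*(P/p) + P = s*P"
  proof -
    have "2*(P/p) + P = P * (p + 2) / p" using p by (simp add: field_simps)
    also have "\<dots> = s * P" unfolding h1 using p by simp
    finally show ?thesis .
  qed
  have c2: "2*Q + Q*q = -(s*Q*q)"
  proof -
    have "2*Q + Q*q = Q * (2 + q)" by (simp add: algebra_simps)
    also have "\<dots> = -(s*Q*q)" unfolding h2 by simp
    finally show ?thesis .
  qed
  have d1: "2*(P/p - Q) + 1*(P - Q*q) = s * (P + Q*q)"
  proof -
    have "2*(P/p - Q) + 1*(P - Q*q) = (2*(P/p) + P) - (2*Q + Q*q)" by (simp add: algebra_simps)
    also have "\<dots> = s * (P + Q*q)" unfolding c1 c2 by (simp add: algebra_simps)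
    finally show ?thesis .
  qed
  have d2: "2*(P/p + Q) + 1*(P + Q*q) = s * (P - Q*q)"
  proof -
    have "2*(P/p + Q) + 1*(P + Q*q) = (2*(P/p) + P) + (2*Q + Q*q)" by (simp add: algebra_simps)
    also have "\<dots> = s * (P - Q*q)" unfolding c1 c2 by (simp add: algebra_simps)
    finally show ?thesis .
  qed
  show ?thesis unfolding d1 d2 by (simp add: algebra_simps)
qed

theorem theorem16:
  fixes t :: int
  shows
   "(\<lambda>m. let n = Suc m in real ((2*n) choose n) * Odd_harm n * lucz (int n + t) / 12 ^ n)
      sums (sqrt 15 * sqrt (phi + 2) / 10 *
        ((phi powi t + psi powi (t+1)) * ln phi - (phi powi t - psi powi (t+1)) * ln (sqrt 5 / 3)))
    \<and> (\<lambda>m. let n = Suc m in real ((2*n) choose n) * Odd_harm n * fibz (int n + t) / 12 ^ n)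
      sums (sqrt 3 * sqrt (phi + 2) / 10 *
        ((phi powi t - psi powi (t+1)) * ln phi - (phi powi t + psi powi (t+1)) * ln (sqrt 5 / 3)))
    \<and> (\<forall>a b :: real. (a \<noteq> 0 \<or> b \<noteq> 0) \<longrightarrow>
      (\<lambda>m. let n = Suc m in real ((2*n) choose n) * Odd_harm n * gib a b (int n + t) / 12 ^ n)
      sums (sqrt 3 * sqrt (phi + 2) / 10 *
        ((a * (phi powi (t-1) - psi powi t) + b * (phi powi t - psi powi (t+1))) * ln phi
         - (a * (phi powi (t-1) + psi powi t) + b * (phi powi t + psi powi (t+1))) * ln (sqrt 5 / 3))))"
proof (intro conjI allI impI)
  fix a b :: real
  show "(\<lambda>m. let n = Suc m in real ((2*n) choose n) * Odd_harm n * gib a b (int n + t) / 12 ^ n)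
      sums (sqrt 3 * sqrt (phi + 2) / 10 *
        ((a * (phi powi (t-1) - psi powi t) + b * (phi powi t - psi powi (t+1))) * ln phi
         - (a * (phi powi (t-1) + psi powi t) + b * (phi powi t + psi powi (t+1))) * ln (sqrt 5 / 3)))"
    by (rule gib_series)
next
  show "(\<lambda>m. let n = Suc m in real ((2*n) choose n) * Odd_harm n * fibz (int n + t) / 12 ^ n)
      sums (sqrt 3 * sqrt (phi + 2) / 10 *
        ((phi powi t - psi powi (t+1)) * ln phi - (phi powi t + psi powi (t+1)) * ln (sqrt 5 / 3)))"
    using gib_series[of 0 1 t] unfolding fibz_def by simp
next
  have p0: "phi \<noteq> 0" using phi_pos by simp
  have q0: "psi \<noteq> 0" using phi_psi by auto
  have e1: "phi powi (t-1) = phi powi t / phi" using p0 by (simp add: power_int_diff)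
  have e2: "psi powi (t+1) = psi powi t * psi" using q0 by (simp add: power_int_add)
  have h1: "phi + 2 = sqrt 5 * phi" by (rule phi2)
  have s15: "sqrt 15 = sqrt 3 * sqrt 5" by (simp add: real_sqrt_mult[symmetric])
  have v: "sqrt 3 * sqrt (phi + 2) / 10 *
        ((2 * (phi powi (t-1) - psi powi t) + 1 * (phi powi t - psi powi (t+1))) * ln phi
         - (2 * (phi powi (t-1) + psi powi t) + 1 * (phi powi t + psi powi (t+1))) * ln (sqrt 5 / 3))
    = sqrt 15 * sqrt (phi + 2) / 10 *
        ((phi powi t + psi powi (t+1)) * ln phi - (phi powi t - psi powi (t+1)) * ln (sqrt 5 / 3))"
    unfolding e1 e2 s15
    using luc_alg[OF p0 h1 psi2, of "sqrt 3 * sqrt (phi + 2)" "phi powi t" "psi powi t" "ln phi" "ln (sqrt 5 / 3)"]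
    by (simp add: algebra_simps)
  show "(\<lambda>m. let n = Suc m in real ((2*n) choose n) * Odd_harm n * lucz (int n + t) / 12 ^ n)
      sums (sqrt 15 * sqrt (phi + 2) / 10 *
        ((phi powi t + psi powi (t+1)) * ln phi - (phi powi t - psi powi (t+1)) * ln (sqrt 5 / 3)))"
    using gib_series[of 2 1 t] unfolding lucz_def v .
qed

end
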